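(* Let $m,\hbar>0$, $0<E<U_0$, $l>0$, and let $U:\mathbb{R}\to\mathbb{R}$ be piecewise continuous with $U(x)=0$ for $x<0$ and $U(x)=U_0$ for $x>l$. Let $\theta\in(-\pi/2,\pi/2)$, $\kappa=\sqrt{2mE}/\hbar$, $a=\kappa\sin\theta$, $k=\kappa\cos\theta$, $\lambda=\sqrt{a^2+\kappa^2}$, $K_U^2=\frac{2m}{\hbar^2}(U_0-E)$, and assume $K_U^2>a^2$; set $k_U=\sqrt{K_U^2-a^2}>0$, $\lambda_U=\sqrt{a^2+K_U^2}$. Consider $\partial_x\tilde\Psi=A(x)\tilde\Psi$ with $A(x)$ as below and $\tilde U=\frac{2m}{\hbar^2}(U-E)$. On $x<0$ let $\psi_R=e^{ikx}v_R$, $\psi_L=e^{-ikx}v_L$ with $v_R=(a+ik,-\kappa^2,-(a-ik),-\kappa^2)^t$, $v_L=\overline{v_R}$, and $\psi_+=e^{\lambda x}w_+$ with $w_+$ a nonzero eigenvector of the constant matrix $A|_{x<0}$ for the eigenvalue $\lambda$. On $x>l$ let $\phi_R=e^{ik_Ux}v_R'$, $\phi_L=e^{-ik_Ux}v_L'$ with $v_R'=(a+ik_U,-K_U^2,a-ik_U,K_U^2)^t$, $v_L'=\overline{v_R'}$, and $\phi_-=e^{-\lambda_Ux}w_-'$ with $w_-'$ a nonzero eigenvector of $A|_{x>l}$ for the eigenvalue $-\lambda_U$. Let $S$ be the space of solutions which equal $a_1\psi_R+a_2\psi_L+a_3\psi_+$ on $x<0$ and $a_4\phi_R+a_5\phi_L+a_6\phi_-$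 on $x>l$ for some constants $a_j\in\mathbb{C}$. Assume that the maps $S\to\mathbb{C}^2$, $\Psi\mapsto(a_1,a_2)$ and $\Psi\mapsto(a_4,a_5)$ are both linear bijections, and let $A_{n\text{-}p}$ be the $2\times2$ matrix with $(a_1,a_2)^t=A_{n\text{-}p}(a_4,a_5)^t$ for all elements of $S$. Then $$\det A_{n\text{-}p}=\frac{k_U\,(E-U_0)}{k\,E}.$$
   Context: Here $A(x)=\begin{pmatrix} a&1&0&0\\0&a&\tilde U(x)&0\\0&0&-a&1\\ \tilde U(x)&0&0&-a\end{pmatrix}$ is the bilayer graphene transfer equation; $\psi_R,\psi_L,\psi_+$ solve it on $x<0$ (where $\tilde U=-\kappa^2$) and $\phi_R,\phi_L,\phi_-$ solve it on $x>l$ (where $\tilde U=K_U^2$). $A_{n\text{-}p}$ is the transmission matrix of the n-p junction between the propagating-wave coefficients on the two sides. *)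

theory Defs
  imports "HOL-Analysis.Analysis"
begin

definition piecewise_continuous :: "(real \<Rightarrow> real) \<Rightarrow> bool" where
  "piecewise_continuous U \<longleftrightarrow>
     (\<exists>D. finite D \<and> (\<forall>x. x \<notin> D \<longrightarrow> isCont U x) \<and>
        (\<forall>x\<in>D. (\<exists>L. (U \<longlongrightarrow> L) (at_left x)) \<and> (\<exists>R. (U \<longlongrightarrow> R) (at_right x))))"

definition Amat :: "real \<Rightarrow> real \<Rightarrow> complex^4^4" where
  "Amat a ut = vector [
      vector [complex_of_real a, 1, 0, 0],
      vector [0, complex_of_real a, complex_of_real ut, 0],
      vector [0, 0, - complex_of_real a, 1],
      vector [complex_of_real ut, 0, 0, - complex_of_real a]]"

text \<open>Solutions of the system: continuous on the real line and satisfying the ODE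
at every point outside a finite set (the coefficient is only piecewise continuous).\<close>
definition is_solution :: "real \<Rightarrow> (real \<Rightarrow> real) \<Rightarrow> (real \<Rightarrow> complex^4) \<Rightarrow> bool" where
  "is_solution a Ut \<Psi> \<longleftrightarrow>
     continuous_on UNIV \<Psi> \<and>
     (\<exists>D. finite D \<and> (\<forall>x. x \<notin> D \<longrightarrow> (\<Psi> has_vector_derivative (Amat a (Ut x) *v \<Psi> x)) (at x)))"

end

theory Submission
  imports Defs
begin


lemma vector_4 [simp]:
 "(vector [x,y,z,w] ::('a::zero)^4)$1 = x"
 "(vector [x,y,z,w] ::('a::zero)^4)$2 = y"
 "(vector [x,y,z,w] ::('a::zero)^4)$3 = z"
 "(vector [x,y,z,w] ::('a::zero)^4)$4 = w"
  unfolding vector_def by simp_all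

definition Om :: "complex^4 \<Rightarrow> complex^4 \<Rightarrow> complex" where
  "Om u w = u$1 * w$4 - u$4 * w$1 - u$2 * w$3 + u$3 * w$2"

lemma Amat_comp:
  "(Amat a u *v v)$1 = of_real a * v$1 + v$2"
  "(Amat a u *v v)$2 = of_real a * v$2 + of_real u * v$3"
  "(Amat a u *v v)$3 = - of_real a * v$3 + v$4"
  "(Amat a u *v v)$4 = of_real u * v$1 - of_real a * v$4"
  by (simp_all add: Amat_def matrix_vector_mult_def sum_4)

lemma Om_A: "Om (Amat a u *v x) y + Om x (Amat a u *v y) = 0"
  unfolding Om_def Amat_comp by (simp add: algebra_simps)

lemma Om_eig:
  assumes "Amat a u *v v = mu *s v" "Amat a u *v w = nu *s w" "mu + nu \<noteq> 0"
  shows "Om v w = 0"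
proof -
  have "Om (mu *s v) w + Om v (nu *s w) = 0" using Om_A[of a u v w] assms by simp
  hence "(mu + nu) * Om v w = 0" by (simp add: Om_def algebra_simps)
  thus ?thesis using assms by simp
qed

lemma Om_anti: "Om v v = 0" by (simp add: Om_def)

lemma Om_expand:
  "Om (a1 *s p + a2 *s q + a3 *s r) (b1 *s p + b2 *s q + b3 *s r)
   = (a1*b2 - a2*b1) * Om p q + (a1*b3 - a3*b1) * Om p r + (a2*b3 - a3*b2) * Om q r"
  by (simp add: Om_def algebra_simps)

lemma Om_smult: "Om (c *s p) (d *s q) = c * d * Om p q"
  by (simp add: Om_def algebra_simps)

lemma Om_deriv:
  assumes "(P has_vector_derivative P') (at x)" "(Q has_vector_derivative Q') (at x)"
  shows "((\<lambda>x. Om (P x) (Q x)) has_vector_derivative (Om P' (Q x) + Om (P x) Q')) (at x)"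
proof -
  have c: "((\<lambda>x. F x $ i) has_vector_derivative F' $ i) (at x)"
    if "(F has_vector_derivative F') (at x)" for F :: "real \<Rightarrow> complex^4" and F' i
    using bounded_linear.has_vector_derivative[OF bounded_linear_vec_nth that] by simp
  note cP = c[OF assms(1)] and cQ = c[OF assms(2)]
  show ?thesis unfolding Om_def
    by (rule derivative_eq_intros cP cQ | simp)+
qed


lemma Om_conserved:
  assumes "is_solution a Ut P" "is_solution a Ut Q"
  shows "Om (P x) (Q x) = Om (P y) (Q y)"
proof -
  obtain D1 where D1: "finite D1" "\<And>x. x \<notin> D1 \<Longrightarrow> (P has_vector_derivative (Amat a (Ut x) *v P x)) (at x)"
    and cP: "continuous_on UNIV P"
    using assms(1) unfolding is_solution_def by blast
  obtain D2 where D2: "finite D2" "\<And>x. x \<notin> D2 \<Longrightarrow> (Q has_vector_derivative (Amat a (Ut x) *v Q x)) (at x)"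
    and cQ: "continuous_on UNIV Q"
    using assms(2) unfolding is_solution_def by blast
  let ?f = "\<lambda>x. Om (P x) (Q x)"
  have cont: "continuous_on UNIV ?f" unfolding Om_def
    using cP cQ by (intro continuous_intros; auto intro: continuous_on_compose2[OF bounded_linear.continuous_on[OF bounded_linear_vec_nth]])
  have "(?f has_derivative (\<lambda>h. 0)) (at z within UNIV)" if "z \<in> UNIV - (D1 \<union> D2)" for z
  proof -
    have "(?f has_vector_derivative 0) (at z)"
      using Om_deriv[OF D1(2) D2(2), of z] Om_A[of a "Ut z" "P z" "Q z"] that by simp
    thus ?thesis by (simp add: has_vector_derivative_def)
  qed
  hence "?f constant_on UNIV"
    using D1(1) D2(1) cont by (intro has_derivative_zero_connected_constant_on[where K="D1 \<union> D2"]) auto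
  thus ?thesis by (auto simp: constant_on_def)
qed



lemma Amat_lin3: "Amat a u *v (c1 *s v1 + c2 *s v2 + c3 *s v3) =
   c1 *s (Amat a u *v v1) + c2 *s (Amat a u *v v2) + c3 *s (Amat a u *v v3)"
  by (simp add: vec_eq_iff forall_4 Amat_comp algebra_simps)

lemma smult_zero_imp: "c *s (v::complex^4) = 0 \<Longrightarrow> v \<noteq> 0 \<Longrightarrow> c = 0"
  by (metis vector_mul_eq_0)

lemma indep3:
  assumes e1: "Amat a u *v v1 = m1 *s v1" and e2: "Amat a u *v v2 = m2 *s v2"
    and e3: "Amat a u *v v3 = m3 *s v3"
    and nz: "v1 \<noteq> 0" "v2 \<noteq> 0" "v3 \<noteq> 0"
    and d: "m1 \<noteq> m2" "m1 \<noteq> m3" "m2 \<noteq> m3"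
    and z: "c1 *s v1 + c2 *s v2 + c3 *s v3 = 0"
  shows "c1 = 0 \<and> c2 = 0 \<and> c3 = 0"
proof -
  have z1: "(c1*m1) *s v1 + (c2*m2) *s v2 + (c3*m3) *s v3 = 0"
    using Amat_lin3[of a u c1 v1 c2 v2 c3 v3] z e1 e2 e3 by (simp add: vector_smult_assoc)
  have z2: "(c1*m1*m1) *s v1 + (c2*m2*m2) *s v2 + (c3*m3*m3) *s v3 = 0"
    using Amat_lin3[of a u "c1*m1" v1 "c2*m2" v2 "c3*m3" v3] z1 e1 e2 e3 by (simp add: vector_smult_assoc)
  have gen: "(c1*(p-q)*(p-r)) = 0"
    if "c1 *s v1 + c2 *s v2 + c3 *s v3 = 0" "(c1*p) *s v1 + (c2*q) *s v2 + (c3*r) *s v3 = 0"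
       "(c1*p*p) *s v1 + (c2*q*q) *s v2 + (c3*r*r) *s v3 = 0" "v1 \<noteq> 0"
     for c1 c2 c3 p q r and v1 v2 v3 :: "complex^4"
  proof -
    have "(c1*(p-q)*(p-r)) *s v1 = 0"
    proof (rule vec_eq_iff[THEN iffD2, rule_format])
      fix i
      have h: "c1 * v1$i + c2 * v2$i + c3 * v3$i = 0" "c1*p * v1$i + c2*q * v2$i + c3*r * v3$i = 0"
        "c1*p*p * v1$i + c2*q*q * v2$i + c3*r*r * v3$i = 0"
        using that(1-3) by (simp_all add: vec_eq_iff)
      have "c1*(p-q)*(p-r) * v1$i = (c1*p*p * v1$i + c2*q*q * v2$i + c3*r*r * v3$i)
          - (q+r) * (c1*p * v1$i + c2*q * v2$i + c3*r * v3$i) + q*r*(c1 * v1$i + c2 * v2$i + c3 * v3$i)"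
        by (simp add: algebra_simps)
      thus "((c1*(p-q)*(p-r)) *s v1) $ i = 0 $ i" using h by simp
    qed
    thus ?thesis using that(4) smult_zero_imp by blast
  qed
  have "c1*(m1-m2)*(m1-m3) = 0" using gen[OF z z1 z2 nz(1)] .
  hence c1: "c1 = 0" using d by simp
  have "c2*(m2-m1)*(m2-m3) = 0" using gen[of c2 v2 c1 v1 c3 v3 m2 m1 m3] z z1 z2 nz(2)
    by (simp add: add_ac)
  hence c2: "c2 = 0" using d by simp
  have "c3 *s v3 = 0" using z c1 c2 by simp
  hence "c3 = 0" using nz(3) smult_zero_imp by blast
  thus ?thesis using c1 c2 by simp
qed

lemma kap2_l: "m > 0 \<Longrightarrow> E > 0 \<Longrightarrow> hbar > 0 \<Longrightarrow> (sqrt (2*m*E) / hbar)^2 = 2*m*E/hbar^2"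
  by (simp add: power_divide)
lemma ak_l: "(K * sin t)^2 + (K * cos t)^2 = (K::real)^2"
  by (metis power_mult_distrib distrib_left sin_cos_squared_add mult_1_right)
lemma cos_pos_l: "- (pi/2) < t \<Longrightarrow> t < pi/2 \<Longrightarrow> cos t > 0"
  by (intro cos_gt_zero_pi) auto
lemma sqrt_pos_l: "(x::real) > 0 \<Longrightarrow> sqrt x > 0" by simp
lemma sqrt_sq_l: "(x::real) \<ge> 0 \<Longrightarrow> (sqrt x)^2 = x" by simp

lemma eR_l: assumes "a^2 + k^2 = K"
  shows "Amat a (-K) *v (vector [Complex a k, - complex_of_real K, - Complex a (- k), - complex_of_real K] :: complex^4)
     = (\<i> * of_real k) *s vector [Complex a k, - complex_of_real K, - Complex a (- k), - complex_of_real K]"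
  using assms
  by (simp add: vec_eq_iff forall_4 Amat_comp complex_eq_iff algebra_simps power2_eq_square)

lemma eL_l: assumes "a^2 + k^2 = K"
  shows "Amat a (-K) *v (\<chi> i. cnj ((vector [Complex a k, - complex_of_real K, - Complex a (- k), - complex_of_real K] :: complex^4) $ i))
     = (- \<i> * of_real k) *s (\<chi> i. cnj ((vector [Complex a k, - complex_of_real K, - Complex a (- k), - complex_of_real K] :: complex^4) $ i))"
  using assms
  by (simp add: vec_eq_iff forall_4 Amat_comp complex_eq_iff algebra_simps power2_eq_square)

lemma eR'_l: assumes "k^2 = K - a^2"
  shows "Amat a K *v (vector [Complex a k, - complex_of_real K, Complex a (- k), complex_of_real K] :: complex^4)
     = (\<i> * of_real k) *s vector [Complex a k, - complex_of_real K, Complex a (- k), complex_of_real K]"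
  using assms
  by (simp add: vec_eq_iff forall_4 Amat_comp complex_eq_iff algebra_simps power2_eq_square)

lemma eL'_l: assumes "k^2 = K - a^2"
  shows "Amat a K *v (\<chi> i. cnj ((vector [Complex a k, - complex_of_real K, Complex a (- k), complex_of_real K] :: complex^4) $ i))
     = (- \<i> * of_real k) *s (\<chi> i. cnj ((vector [Complex a k, - complex_of_real K, Complex a (- k), complex_of_real K] :: complex^4) $ i))"
  using assms
  by (simp add: vec_eq_iff forall_4 Amat_comp complex_eq_iff algebra_simps power2_eq_square)

lemma nz_l: "K \<noteq> 0 \<Longrightarrow> (vector [x, - complex_of_real K, y, z] :: complex^4) \<noteq> 0"
  by (auto simp: vec_eq_iff forall_4)
lemma nzc_l: "K \<noteq> 0 \<Longrightarrow> (\<chi> i. cnj ((vector [x, - complex_of_real K, y, z] :: complex^4) $ i)) \<noteq> 0"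
  by (auto simp: vec_eq_iff forall_4)

lemma omL_l: "Om (vector [Complex a k, - complex_of_real K, - Complex a (- k), - complex_of_real K])
   (\<chi> i. cnj ((vector [Complex a k, - complex_of_real K, - Complex a (- k), - complex_of_real K] :: complex^4) $ i))
   = \<i> * of_real (-4 * k * K)"
  by (simp add: Om_def complex_eq_iff algebra_simps)
lemma omR_l: "Om (vector [Complex a k, - complex_of_real K, Complex a (- k), complex_of_real K])
   (\<chi> i. cnj ((vector [Complex a k, - complex_of_real K, Complex a (- k), complex_of_real K] :: complex^4) $ i))
   = \<i> * of_real (4 * k * K)"
  by (simp add: Om_def complex_eq_iff algebra_simps)

lemma uniq3:
  assumes "Amat a u *v v1 = m1 *s v1" "Amat a u *v v2 = m2 *s v2" "Amat a u *v v3 = m3 *s v3"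
    and "v1 \<noteq> 0" "v2 \<noteq> 0" "v3 \<noteq> 0"
    and "m1 \<noteq> m2" "m1 \<noteq> m3" "m2 \<noteq> m3"
    and ne: "e1 \<noteq> 0" "e2 \<noteq> 0" "e3 \<noteq> 0"
    and eq: "c1 *s (e1 *s v1) + c2 *s (e2 *s v2) + c3 *s (e3 *s v3) = d1 *s (e1 *s v1) + d2 *s (e2 *s v2) + d3 *s (e3 *s v3)"
  shows "c1 = d1 \<and> c2 = d2 \<and> c3 = d3"
proof -
  have "((c1-d1)*e1) *s v1 + ((c2-d2)*e2) *s v2 + ((c3-d3)*e3) *s v3 = 0"
    using eq by (simp add: vec_eq_iff algebra_simps)
  from indep3[OF assms(1-9) this] ne show ?thesis by simp
qed

lemma val3:
  assumes "Om v1 v3 = 0" "Om v2 v3 = 0"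
  shows "Om (c1 *s (e1 *s v1) + c2 *s (e2 *s v2) + c3 *s (e3 *s v3)) (d1 *s (e1 *s v1) + d2 *s (e2 *s v2) + d3 *s (e3 *s v3))
     = (c1*d2 - c2*d1) * (e1*e2) * Om v1 v2"
proof -
  have "Om (c1 *s (e1 *s v1) + c2 *s (e2 *s v2) + c3 *s (e3 *s v3)) (d1 *s (e1 *s v1) + d2 *s (e2 *s v2) + d3 *s (e3 *s v3))
    = Om ((c1*e1) *s v1 + (c2*e2) *s v2 + (c3*e3) *s v3) ((d1*e1) *s v1 + (d2*e2) *s v2 + (d3*e3) *s v3)"
    by (simp add: vector_smult_assoc)
  also have "\<dots> = (c1*e1*(d2*e2) - c2*e2*(d1*e1)) * Om v1 v2" unfolding Om_expand using assms by simp
  finally show ?thesis by (simp add: algebra_simps)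
qed

lemma exp_pair: "exp (\<i> * z) * exp (- \<i> * z) = 1"
  by (simp add: exp_minus)
lemma cancel_i: "x * (\<i> * y) = \<i> * z \<Longrightarrow> x * y = (z::complex)"
  by (metis complex_i_not_zero mult.left_commute mult_left_cancel)
lemma solve_c: "x * complex_of_real y = complex_of_real z \<Longrightarrow> y \<noteq> 0 \<Longrightarrow> x = complex_of_real (z / y)"
  by (simp add: field_simps)
lemma real_fin: "(m::real) > 0 \<Longrightarrow> hbar > 0 \<Longrightarrow> E > 0 \<Longrightarrow> k > 0 \<Longrightarrow>
   4 * kU * (2 * m / hbar^2 * (U0 - E)) / (-4 * k * (2*m*E/hbar^2)) = kU * (E - U0) / (k * E)"
  by (simp add: field_simps)

theorem mainTheorem6:
  fixes m hbar E U0 l \<theta> :: real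
    and U :: "real \<Rightarrow> real"
    and wp wm :: "complex^4"
    and M :: "complex^2^2"
  assumes m_pos: "m > 0" and hbar_pos: "hbar > 0"
    and E_pos: "0 < E" and E_lt: "E < U0" and l_pos: "l > 0"
    and U_pc: "piecewise_continuous U"
    and U_left: "\<forall>x<0. U x = 0" and U_right: "\<forall>x>l. U x = U0"
    and theta: "- (pi/2) < \<theta>" "\<theta> < pi/2"
  defines "\<kappa> \<equiv> sqrt (2 * m * E) / hbar"
  defines "a \<equiv> \<kappa> * sin \<theta>"
  defines "k \<equiv> \<kappa> * cos \<theta>"
  defines "lam \<equiv> sqrt (a^2 + \<kappa>^2)"
  defines "KU2 \<equiv> 2 * m / hbar^2 * (U0 - E)"
  assumes KU2_gt: "KU2 > a^2"
  defines "kU \<equiv> sqrt (KU2 - a^2)"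
  defines "lamU \<equiv> sqrt (a^2 + KU2)"
  defines "Ut \<equiv> (\<lambda>x. 2 * m / hbar^2 * (U x - E))"
  defines "vR \<equiv> vector [Complex a k, - complex_of_real (\<kappa>^2), - Complex a (- k),
                          - complex_of_real (\<kappa>^2)] :: complex^4"
  defines "vL \<equiv> (\<chi> i. cnj (vR $ i)) :: complex^4"
  defines "vR' \<equiv> vector [Complex a kU, - complex_of_real KU2, Complex a (- kU),
                          complex_of_real KU2] :: complex^4"
  defines "vL' \<equiv> (\<chi> i. cnj (vR' $ i)) :: complex^4"
  assumes wp_nz: "wp \<noteq> 0"
    and wp_eig: "Amat a (- (\<kappa>^2)) *v wp = complex_of_real lam *s wp"
    and wm_nz: "wm \<noteq> 0"
    and wm_eig: "Amat a KU2 *v wm = complex_of_real (- lamU) *s wm"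
  defines "\<psi>R \<equiv> (\<lambda>x. exp (\<i> * complex_of_real (k * x)) *s vR)"
  defines "\<psi>L \<equiv> (\<lambda>x. exp (- \<i> * complex_of_real (k * x)) *s vL)"
  defines "\<psi>p \<equiv> (\<lambda>x. complex_of_real (exp (lam * x)) *s wp)"
  defines "\<phi>R \<equiv> (\<lambda>x. exp (\<i> * complex_of_real (kU * x)) *s vR')"
  defines "\<phi>L \<equiv> (\<lambda>x. exp (- \<i> * complex_of_real (kU * x)) *s vL')"
  defines "\<phi>m \<equiv> (\<lambda>x. complex_of_real (exp (- lamU * x)) *s wm)"
  defines "S \<equiv> {\<Psi>. is_solution a Ut \<Psi> \<and>
                 (\<exists>a1 a2 a3. \<forall>x<0. \<Psi> x = a1 *s \<psi>R x + a2 *s \<psi>L x + a3 *s \<psi>p x) \<and>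
                 (\<exists>a4 a5 a6. \<forall>x>l. \<Psi> x = a4 *s \<phi>R x + a5 *s \<phi>L x + a6 *s \<phi>m x)}"
  defines "leftc \<equiv> (\<lambda>\<Psi>. THE c :: complex^2. \<exists>a3. \<forall>x<0.
                 \<Psi> x = (c $ 1) *s \<psi>R x + (c $ 2) *s \<psi>L x + a3 *s \<psi>p x)"
  defines "rightc \<equiv> (\<lambda>\<Psi>. THE c :: complex^2. \<exists>a6. \<forall>x>l.
                 \<Psi> x = (c $ 1) *s \<phi>R x + (c $ 2) *s \<phi>L x + a6 *s \<phi>m x)"
  assumes left_lin: "\<forall>\<Psi>\<in>S. \<forall>\<Phi>\<in>S. \<forall>c::complex.
                 leftc (\<lambda>x. \<Psi> x + c *s \<Phi> x) = leftc \<Psi> + c *s leftc \<Phi>"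
    and right_lin: "\<forall>\<Psi>\<in>S. \<forall>\<Phi>\<in>S. \<forall>c::complex.
                 rightc (\<lambda>x. \<Psi> x + c *s \<Phi> x) = rightc \<Psi> + c *s rightc \<Phi>"
    and left_bij: "bij_betw leftc S UNIV"
    and right_bij: "bij_betw rightc S UNIV"
    and M_def: "\<forall>\<Psi>\<in>S. leftc \<Psi> = M *v rightc \<Psi>"
  shows "det M = complex_of_real (kU * (E - U0) / (k * E))"
proof -
  have kap_pos: "\<kappa> > 0" unfolding \<kappa>_def using m_pos E_pos hbar_pos by simp
  have kap2: "\<kappa>^2 = 2*m*E/hbar^2" unfolding \<kappa>_def by (rule kap2_l[OF m_pos E_pos hbar_pos])
  have cos_pos: "cos \<theta> > 0" by (rule cos_pos_l[OF theta])
  have k_pos: "k > 0" unfolding k_def using kap_pos cos_pos by simp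
  have ak: "a^2 + k^2 = \<kappa>^2" unfolding a_def k_def by (rule ak_l)
  have lam_pos: "lam > 0" unfolding lam_def using kap_pos by (intro sqrt_pos_l) (simp add: add_nonneg_pos)
  have kU_pos: "kU > 0" unfolding kU_def using KU2_gt by (intro sqrt_pos_l) simp
  have kU2: "kU^2 = KU2 - a^2" unfolding kU_def using KU2_gt by (intro sqrt_sq_l) simp
  have KU2_pos: "KU2 > 0" using KU2_gt by (smt (verit) zero_le_power2)
  have lamU_pos: "lamU > 0" unfolding lamU_def using KU2_pos by (intro sqrt_pos_l) (simp add: add_nonneg_pos)
  have eR: "Amat a (- (\<kappa>^2)) *v vR = (\<i> * of_real k) *s vR"
    unfolding vR_def by (rule eR_l[OF ak])
  have eL: "Amat a (- (\<kappa>^2)) *v vL = (- \<i> * of_real k) *s vL"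
    unfolding vL_def vR_def by (rule eL_l[OF ak])
  have eR': "Amat a KU2 *v vR' = (\<i> * of_real kU) *s vR'"
    unfolding vR'_def by (rule eR'_l[OF kU2])
  have eL': "Amat a KU2 *v vL' = (- \<i> * of_real kU) *s vL'"
    unfolding vL'_def vR'_def by (rule eL'_l[OF kU2])
  have nR: "vR \<noteq> 0" unfolding vR_def using kap_pos by (intro nz_l) simp
  have nL: "vL \<noteq> 0" unfolding vL_def vR_def using kap_pos by (intro nzc_l) simp
  have nR': "vR' \<noteq> 0" unfolding vR'_def using KU2_pos by (intro nz_l) simp
  have nL': "vL' \<noteq> 0" unfolding vL'_def vR'_def using KU2_pos by (intro nzc_l) simp
  have omL: "Om vR vL = \<i> * of_real (-4 * k * \<kappa>^2)"
    unfolding vL_def vR_def by (rule omL_l)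
  have omR: "Om vR' vL' = \<i> * of_real (4 * kU * KU2)"
    unfolding vL'_def vR'_def by (rule omR_l)
  have o1: "Om vR wp = 0" using Om_eig[OF eR wp_eig] lam_pos by (auto simp: complex_eq_iff)
  have o2: "Om vL wp = 0" using Om_eig[OF eL wp_eig] lam_pos by (auto simp: complex_eq_iff)
  have o3: "Om vR' wm = 0" using Om_eig[OF eR' wm_eig] lamU_pos by (auto simp: complex_eq_iff)
  have o4: "Om vL' wm = 0" using Om_eig[OF eL' wm_eig] lamU_pos by (auto simp: complex_eq_iff)
  have d1: "\<i> * of_real k \<noteq> - \<i> * of_real k" "\<i> * of_real k \<noteq> of_real lam" "- \<i> * of_real k \<noteq> of_real lam"
    using k_pos by (auto simp: complex_eq_iff)
  have d2: "\<i> * of_real kU \<noteq> - \<i> * of_real kU" "\<i> * of_real kU \<noteq> of_real (- lamU)"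
     "- \<i> * of_real kU \<noteq> of_real (-lamU)"
    using kU_pos by (auto simp: complex_eq_iff)
  have sol: "\<And>\<Psi>. \<Psi> \<in> S \<Longrightarrow> is_solution a Ut \<Psi>" unfolding S_def by blast
  have repL: "\<And>\<Psi>. \<Psi> \<in> S \<Longrightarrow> \<exists>a1 a2 a3. \<forall>x<0. \<Psi> x = a1 *s \<psi>R x + a2 *s \<psi>L x + a3 *s \<psi>p x"
    unfolding S_def by blast
  have repR: "\<And>\<Psi>. \<Psi> \<in> S \<Longrightarrow> \<exists>a4 a5 a6. \<forall>x>l. \<Psi> x = a4 *s \<phi>R x + a5 *s \<phi>L x + a6 *s \<phi>m x"
    unfolding S_def by blast
  have leftc_eq: "leftc \<Psi> = vector [a1, a2]"
    if h: "\<forall>x<0. \<Psi> x = a1 *s \<psi>R x + a2 *s \<psi>L x + a3 *s \<psi>p x" for \<Psi> a1 a2 a3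
    unfolding leftc_def
  proof (rule the_equality)
    show "\<exists>a3'. \<forall>x<0. \<Psi> x = ((vector [a1, a2] :: complex^2) $ 1) *s \<psi>R x + ((vector [a1, a2] :: complex^2) $ 2) *s \<psi>L x + a3' *s \<psi>p x"
      using h by auto
    fix c :: "complex^2"
    assume "\<exists>a3'. \<forall>x<0. \<Psi> x = (c $ 1) *s \<psi>R x + (c $ 2) *s \<psi>L x + a3' *s \<psi>p x"
    then obtain b3 where hb: "\<forall>x<0. \<Psi> x = (c $ 1) *s \<psi>R x + (c $ 2) *s \<psi>L x + b3 *s \<psi>p x" by blast
    have "(c $ 1) *s \<psi>R (-1) + (c $ 2) *s \<psi>L (-1) + b3 *s \<psi>p (-1) = a1 *s \<psi>R (-1) + a2 *s \<psi>L (-1) + a3 *s \<psi>p (-1)"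
      using h[rule_format, of "-1"] hb[rule_format, of "-1"] by simp
    hence "c $ 1 = a1 \<and> c $ 2 = a2 \<and> b3 = a3" unfolding \<psi>R_def \<psi>L_def \<psi>p_def
      by (rule uniq3[OF eR eL wp_eig nR nL wp_nz d1, rotated 3]) simp_all
    thus "c = vector [a1, a2]" by (simp add: vec_eq_iff forall_2)
  qed
  have rightc_eq: "rightc \<Psi> = vector [a4, a5]"
    if h: "\<forall>x>l. \<Psi> x = a4 *s \<phi>R x + a5 *s \<phi>L x + a6 *s \<phi>m x" for \<Psi> a4 a5 a6
    unfolding rightc_def
  proof (rule the_equality)
    show "\<exists>a6'. \<forall>x>l. \<Psi> x = ((vector [a4, a5] :: complex^2) $ 1) *s \<phi>R x + ((vector [a4, a5] :: complex^2) $ 2) *s \<phi>L x + a6' *s \<phi>m x"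
      using h by auto
    fix c :: "complex^2"
    assume "\<exists>a6'. \<forall>x>l. \<Psi> x = (c $ 1) *s \<phi>R x + (c $ 2) *s \<phi>L x + a6' *s \<phi>m x"
    then obtain b6 where hb: "\<forall>x>l. \<Psi> x = (c $ 1) *s \<phi>R x + (c $ 2) *s \<phi>L x + b6 *s \<phi>m x" by blast
    have "(c $ 1) *s \<phi>R (l+1) + (c $ 2) *s \<phi>L (l+1) + b6 *s \<phi>m (l+1) = a4 *s \<phi>R (l+1) + a5 *s \<phi>L (l+1) + a6 *s \<phi>m (l+1)"
      using h[rule_format, of "l+1"] hb[rule_format, of "l+1"] by simp
    hence "c $ 1 = a4 \<and> c $ 2 = a5 \<and> b6 = a6" unfolding \<phi>R_def \<phi>L_def \<phi>m_def
      by (rule uniq3[OF eR' eL' wm_eig nR' nL' wm_nz d2, rotated 3]) simp_all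
    thus "c = vector [a4, a5]" by (simp add: vec_eq_iff forall_2)
  qed
  have surjR: "rightc ` S = UNIV" using right_bij unfolding bij_betw_def by blast
  obtain \<Psi> where P1: "\<Psi> \<in> S" and P2: "rightc \<Psi> = vector [1, 0]"
    using surjR by (metis UNIV_I imageE)
  obtain \<Phi> where F1: "\<Phi> \<in> S" and F2: "rightc \<Phi> = vector [0, 1]"
    using surjR by (metis UNIV_I imageE)
  obtain a1 a2 a3 where hl: "\<forall>x<0. \<Psi> x = a1 *s \<psi>R x + a2 *s \<psi>L x + a3 *s \<psi>p x" using repL[OF P1] by blast
  obtain a4 a5 a6 where hr: "\<forall>x>l. \<Psi> x = a4 *s \<phi>R x + a5 *s \<phi>L x + a6 *s \<phi>m x" using repR[OF P1] by blast
  obtain b1 b2 b3 where gl: "\<forall>x<0. \<Phi> x = b1 *s \<psi>R x + b2 *s \<psi>L x + b3 *s \<psi>p x" using repL[OF F1] by blast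
  obtain b4 b5 b6 where gr: "\<forall>x>l. \<Phi> x = b4 *s \<phi>R x + b5 *s \<phi>L x + b6 *s \<phi>m x" using repR[OF F1] by blast
  have "vector [a4, a5] = (vector [1, 0] :: complex^2)" using rightc_eq[OF hr] P2 by simp
  hence a45: "a4 = 1" "a5 = 0" using vector_2[of a4 a5] vector_2[of "1::complex" 0] by metis+
  have "vector [b4, b5] = (vector [0, 1] :: complex^2)" using rightc_eq[OF gr] F2 by simp
  hence b45: "b4 = 0" "b5 = 1" using vector_2[of b4 b5] vector_2[of "0::complex" 1] by metis+
  have "vector [a1, a2] = M *v vector [1, 0]" using leftc_eq[OF hl] M_def P1 P2 by simp
  hence "a1 = M$1$1 \<and> a2 = M$2$1" by (simp add: vec_eq_iff forall_2 matrix_vector_mult_def sum_2)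
  hence a12: "a1 = M$1$1" "a2 = M$2$1" by simp_all
  have "vector [b1, b2] = M *v vector [0, 1]" using leftc_eq[OF gl] M_def F1 F2 by simp
  hence "b1 = M$1$2 \<and> b2 = M$2$2" by (simp add: vec_eq_iff forall_2 matrix_vector_mult_def sum_2)
  hence b12: "b1 = M$1$2" "b2 = M$2$2" by simp_all
  have cons: "Om (\<Psi> (-1)) (\<Phi> (-1)) = Om (\<Psi> (l+1)) (\<Phi> (l+1))"
    by (rule Om_conserved[OF sol[OF P1] sol[OF F1]])
  have lv: "Om (\<Psi> (-1)) (\<Phi> (-1)) = (a1*b2 - a2*b1) * Om vR vL"
  proof -
    have "Om (\<Psi> (-1)) (\<Phi> (-1)) = Om (a1 *s \<psi>R (-1) + a2 *s \<psi>L (-1) + a3 *s \<psi>p (-1))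
         (b1 *s \<psi>R (-1) + b2 *s \<psi>L (-1) + b3 *s \<psi>p (-1))"
      using hl[rule_format, of "-1"] gl[rule_format, of "-1"] by simp
    also have "\<dots> = (a1*b2 - a2*b1) * (exp (\<i> * complex_of_real (k * -1)) * exp (- \<i> * complex_of_real (k * -1))) * Om vR vL"
      unfolding \<psi>R_def \<psi>L_def \<psi>p_def by (rule val3[OF o1 o2])
    also have "\<dots> = (a1*b2 - a2*b1) * Om vR vL" by (simp only: exp_pair mult_1_right)
    finally show ?thesis .
  qed
  have rv: "Om (\<Psi> (l+1)) (\<Phi> (l+1)) = (a4*b5 - a5*b4) * Om vR' vL'"
  proof -
    have "Om (\<Psi> (l+1)) (\<Phi> (l+1)) = Om (a4 *s \<phi>R (l+1) + a5 *s \<phi>L (l+1) + a6 *s \<phi>m (l+1))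
         (b4 *s \<phi>R (l+1) + b5 *s \<phi>L (l+1) + b6 *s \<phi>m (l+1))"
      using hr[rule_format, of "l+1"] gr[rule_format, of "l+1"] by simp
    also have "\<dots> = (a4*b5 - a5*b4) * (exp (\<i> * complex_of_real (kU * (l+1))) * exp (- \<i> * complex_of_real (kU * (l+1)))) * Om vR' vL'"
      unfolding \<phi>R_def \<phi>L_def \<phi>m_def by (rule val3[OF o3 o4])
    also have "\<dots> = (a4*b5 - a5*b4) * Om vR' vL'" by (simp only: exp_pair mult_1_right)
    finally show ?thesis .
  qed
  have detM: "det M = a1*b2 - a2*b1" unfolding det_2 a12 b12 by (simp add: algebra_simps)
  have "det M * (\<i> * of_real (-4 * k * \<kappa>^2)) = (a1*b2 - a2*b1) * Om vR vL" by (simp only: detM omL)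
  also have "\<dots> = (a4*b5 - a5*b4) * Om vR' vL'" by (simp only: lv[symmetric] cons rv)
  also have "\<dots> = \<i> * of_real (4 * kU * KU2)" by (simp add: a45 b45 omR)
  finally have eq: "det M * (\<i> * of_real (-4 * k * \<kappa>^2)) = \<i> * of_real (4 * kU * KU2)" .
  have nzd: "-4 * k * \<kappa>^2 \<noteq> 0" using k_pos kap_pos by simp
  have "det M = of_real (4 * kU * KU2 / (-4 * k * \<kappa>^2))"
    by (rule solve_c[OF cancel_i[OF eq] nzd])
  also have "4 * kU * KU2 / (-4 * k * \<kappa>^2) = kU * (E - U0) / (k * E)"
    unfolding kap2 KU2_def by (rule real_fin[OF m_pos hbar_pos E_pos k_pos])
  finally show ?thesis .
qed
end
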